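(* Let $n \ge 1$ and let $X = [q_{ij}] \in \{0,1\}^{n\times n}$ be any infeasible solution, i.e. a binary $n\times n$ matrix in which at least one row sum or column sum differs from $1$. Run the Bit-Flip Heuristic Algorithm (BFHA), described in the context, on input $X$, with ties broken arbitrarily. Then the algorithm terminates, and its output is a feasible solution, i.e. a binary $n\times n$ matrix all of whose row sums and column sums equal $1$ (a permutation matrix).
   Context: A solution of the assignment/QAP constraints is a binary matrix $X=[q_{ij}]\in\{0,1\}^{n\times n}$. It is feasible if $\sum_{j=1}^n q_{ij}=1$ for every $i$ and $\sum_{i=1}^n q_{ij}=1$ for every $j$ (one-hot constraints on all rows and columns). Otherwise it is infeasible. For the current matrix $X$ define the violation matrix $V=[v_{ij}]$ by $v_{ij}=\sum_{l=1}^{n} q_{il}+\sum_{k=1}^{n} q_{kj}-2$. Then $X$ is feasible if and only if $V=0$. The Bit-Flip Heuristic Algorithm (BFHA) takes $X$ as input and, as long as $V\neq 0$, repeats the following step and then recomputes $V$ for the updated $X$: (i) If some entry of $V$ is $\ge 1$, choose a position $(i,j)$ with $q_{ij}=1$ whose value $v_{ij}$ is largest among all positions with $q_{ij}=1$, and set $q_{ij}:=0$. (ii) Otherwise, if some entry of $V$ is $\le -1$, choose a position $(i,j)$ with $q_{ij}=0$ whose value $v_{ij}$ is smallest among all positions with $q_{ij}=0$, and set $q_{ij}:=1$. When $V=0$ the algorithm stops and outputs the current $X$. *)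

theory Defs
  imports Main
begin

text \<open>An n x n matrix is represented as a function nat => nat => int; only the
entries with indices i < n, j < n are relevant (indices 0..n-1 instead of 1..n).\<close>

definition rowsum :: "nat \<Rightarrow> (nat \<Rightarrow> nat \<Rightarrow> int) \<Rightarrow> nat \<Rightarrow> int" where
  "rowsum n X i = (\<Sum>l<n. X i l)"

definition colsum :: "nat \<Rightarrow> (nat \<Rightarrow> nat \<Rightarrow> int) \<Rightarrow> nat \<Rightarrow> int" where
  "colsum n X j = (\<Sum>k<n. X k j)"

definition viol :: "nat \<Rightarrow> (nat \<Rightarrow> nat \<Rightarrow> int) \<Rightarrow> nat \<Rightarrow> nat \<Rightarrow> int" where
  "viol n X i j = rowsum n X i + colsum n X j - 2"

definition binary :: "nat \<Rightarrow> (nat \<Rightarrow> nat \<Rightarrow> int) \<Rightarrow> bool" where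
  "binary n X \<longleftrightarrow> (\<forall>i<n. \<forall>j<n. X i j = 0 \<or> X i j = 1)"

definition feasible :: "nat \<Rightarrow> (nat \<Rightarrow> nat \<Rightarrow> int) \<Rightarrow> bool" where
  "feasible n X \<longleftrightarrow> binary n X \<and> (\<forall>i<n. rowsum n X i = 1) \<and> (\<forall>j<n. colsum n X j = 1)"

definition V_zero :: "nat \<Rightarrow> (nat \<Rightarrow> nat \<Rightarrow> int) \<Rightarrow> bool" where
  "V_zero n X \<longleftrightarrow> (\<forall>i<n. \<forall>j<n. viol n X i j = 0)"

definition set_entry :: "(nat \<Rightarrow> nat \<Rightarrow> int) \<Rightarrow> nat \<Rightarrow> nat \<Rightarrow> int \<Rightarrow> (nat \<Rightarrow> nat \<Rightarrow> int)" where
  "set_entry X i j c = X(i := (X i)(j := c))"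

text \<open>One step of BFHA (performed only while V \<noteq> 0), with arbitrary tie breaking:
  bfha_step n X Y holds iff Y is a possible result of one iteration on X.\<close>
definition bfha_step :: "nat \<Rightarrow> (nat \<Rightarrow> nat \<Rightarrow> int) \<Rightarrow> (nat \<Rightarrow> nat \<Rightarrow> int) \<Rightarrow> bool" where
  "bfha_step n X Y \<longleftrightarrow> \<not> V_zero n X \<and>
     ((\<exists>i<n. \<exists>j<n. viol n X i j \<ge> 1) \<and>
        (\<exists>i<n. \<exists>j<n. X i j = 1 \<and>
           (\<forall>k<n. \<forall>l<n. X k l = 1 \<longrightarrow> viol n X k l \<le> viol n X i j) \<and>
           Y = set_entry X i j 0)
      \<or>
      \<not> (\<exists>i<n. \<exists>j<n. viol n X i j \<ge> 1) \<and> (\<exists>i<n. \<exists>j<n. viol n X i j \<le> -1) \<and>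
        (\<exists>i<n. \<exists>j<n. X i j = 0 \<and>
           (\<forall>k<n. \<forall>l<n. X k l = 0 \<longrightarrow> viol n X i j \<le> viol n X k l) \<and>
           Y = set_entry X i j 1))"

end

theory Submission
  imports Defs
begin

lemma rowsum_set:
  assumes "j < n"
  shows "rowsum n (set_entry X i j c) k = (if k = i then rowsum n X k - X i j + c else rowsum n X k)"
proof (cases "k = i")
  case True
  have "(\<Sum>l<n. ((X i)(j := c)) l) = (\<Sum>l<n. X i l + (if l = j then c - X i j else 0))"
    by (rule sum.cong) auto
  also have "\<dots> = (\<Sum>l<n. X i l) + (c - X i j)"
    using assms by (simp add: sum.distrib)
  finally show ?thesis using True by (simp add: rowsum_def set_entry_def)
next
  case False
  then show ?thesis by (simp add: rowsum_def set_entry_def)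
qed

lemma colsum_set:
  assumes "i < n"
  shows "colsum n (set_entry X i j c) l = (if l = j then colsum n X l - X i j + c else colsum n X l)"
proof (cases "l = j")
  case True
  have "(\<Sum>k<n. set_entry X i j c k j) = (\<Sum>k<n. X k j + (if k = i then c - X i j else 0))"
    by (rule sum.cong) (auto simp: set_entry_def)
  also have "\<dots> = (\<Sum>k<n. X k j) + (c - X i j)"
    using assms by (simp add: sum.distrib)
  finally show ?thesis using True by (simp add: colsum_def)
next
  case False
  then show ?thesis unfolding colsum_def set_entry_def by (auto intro: sum.cong)
qed

lemma binary_set:
  assumes "binary n X" "c = 0 \<or> c = 1"
  shows "binary n (set_entry X i j c)"
  using assms unfolding binary_def set_entry_def by auto

lemma rowsum_nonneg: "binary n X \<Longrightarrow> i < n \<Longrightarrow> rowsum n X i \<ge> 0"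
  unfolding rowsum_def binary_def by (rule sum_nonneg) force

lemma colsum_nonneg: "binary n X \<Longrightarrow> j < n \<Longrightarrow> colsum n X j \<ge> 0"
  unfolding colsum_def binary_def by (rule sum_nonneg) force

lemma entry_le_rowsum: "binary n X \<Longrightarrow> i < n \<Longrightarrow> j < n \<Longrightarrow> X i j \<le> rowsum n X i"
  unfolding rowsum_def binary_def
  by (rule member_le_sum[where f="X i" and A="{..<n}", simplified]) force+

lemma entry_le_colsum: "binary n X \<Longrightarrow> i < n \<Longrightarrow> j < n \<Longrightarrow> X i j \<le> colsum n X j"
  unfolding colsum_def binary_def
  by (rule member_le_sum[where f="\<lambda>k. X k j" and A="{..<n}", simplified]) force+

lemma rowsum_pos_entry:
  assumes "binary n X" "i < n" "rowsum n X i \<ge> 1"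
  obtains j where "j < n" "X i j = 1"
proof -
  have "\<exists>j<n. X i j = 1"
  proof (rule ccontr)
    assume "\<not> ?thesis"
    then have "\<forall>j<n. X i j = 0" using assms(1,2) unfolding binary_def by auto
    then have "rowsum n X i = 0" unfolding rowsum_def by simp
    then show False using assms(3) by simp
  qed
  then show ?thesis using that by blast
qed

lemma colsum_pos_entry:
  assumes "binary n X" "j < n" "colsum n X j \<ge> 1"
  obtains i where "i < n" "X i j = 1"
proof -
  have "\<exists>i<n. X i j = 1"
  proof (rule ccontr)
    assume "\<not> ?thesis"
    then have "\<forall>i<n. X i j = 0" using assms(1,2) unfolding binary_def by auto
    then have "colsum n X j = 0" unfolding colsum_def by simp
    then show False using assms(3) by simp
  qed
  then show ?thesis using that by blast
qed

definition B :: "nat \<Rightarrow> (nat \<Rightarrow> nat \<Rightarrow> int) \<Rightarrow> bool" where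
  "B n X \<longleftrightarrow> (\<exists>i<n. \<exists>j<n. viol n X i j \<ge> 1)"

lemma notB_row:
  assumes "binary n X" "\<not> B n X" "i < n"
  shows "rowsum n X i \<le> 1"
proof (rule ccontr)
  assume "\<not> ?thesis"
  then obtain j where j: "j < n" "X i j = 1" using rowsum_pos_entry[OF assms(1,3)] by force
  have "colsum n X j \<ge> 1" using entry_le_colsum[OF assms(1,3) j(1)] j by simp
  then have "viol n X i j \<ge> 1" using \<open>\<not> rowsum n X i \<le> 1\<close> unfolding viol_def by simp
  then show False using assms(2,3) j unfolding B_def by blast
qed

lemma notB_col:
  assumes "binary n X" "\<not> B n X" "j < n"
  shows "colsum n X j \<le> 1"
proof (rule ccontr)
  assume "\<not> ?thesis"
  then obtain i where i: "i < n" "X i j = 1" using colsum_pos_entry[OF assms(1,3)] by force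
  have "rowsum n X i \<ge> 1" using entry_le_rowsum[OF assms(1) i(1) assms(3)] i by simp
  then have "viol n X i j \<ge> 1" using \<open>\<not> colsum n X j \<le> 1\<close> unfolding viol_def by simp
  then show False using assms(2,3) i unfolding B_def by blast
qed

lemma sums_eq: "(\<Sum>i<n. rowsum n X i) = (\<Sum>j<n. colsum n X j)"
  unfolding rowsum_def colsum_def by (rule sum.swap)

lemma sum_le_except:
  fixes f :: "nat \<Rightarrow> int"
  assumes "a < n" "f a \<le> 0" "\<forall>k<n. f k \<le> 1"
  shows "(\<Sum>k<n. f k) \<le> int n - 1"
proof -
  have "(\<Sum>k<n. f k) = f a + (\<Sum>k\<in>{..<n} - {a}. f k)"
    using assms(1) by (simp add: sum.remove)
  also have "(\<Sum>k\<in>{..<n} - {a}. f k) \<le> (\<Sum>k\<in>{..<n} - {a}. 1)"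
    using assms(3) by (intro sum_mono) auto
  also have "(\<Sum>k\<in>{..<n} - {a}. (1::int)) = int n - 1"
    using assms(1) by simp
  finally show ?thesis using assms(2) by simp
qed

lemma sum_ge_all:
  fixes f :: "nat \<Rightarrow> int"
  assumes "\<forall>k<n. f k \<ge> 1"
  shows "(\<Sum>k<n. f k) \<ge> int n"
proof -
  have "(\<Sum>k<n. (1::int)) \<le> (\<Sum>k<n. f k)" using assms by (intro sum_mono) auto
  then show ?thesis by simp
qed

lemma empty_cell:
  assumes "binary n X" "\<not> B n X" "\<not> V_zero n X"
  shows "\<exists>i<n. \<exists>j<n. rowsum n X i = 0 \<and> colsum n X j = 0"
proof -
  obtain a b where ab: "a < n" "b < n" "viol n X a b \<noteq> 0"
    using assms(3) unfolding V_zero_def by blast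
  then have "viol n X a b \<le> -1" using assms(2) unfolding B_def by force
  then have "rowsum n X a + colsum n X b \<le> 1" unfolding viol_def by simp
  moreover have "rowsum n X a \<ge> 0" "colsum n X b \<ge> 0"
    using rowsum_nonneg colsum_nonneg assms(1) ab by auto
  ultimately consider "rowsum n X a = 0" | "colsum n X b = 0" by linarith
  then show ?thesis
  proof cases
    case 1
    have "(\<Sum>i<n. rowsum n X i) \<le> int n - 1"
      using sum_le_except[OF ab(1)] 1 notB_row[OF assms(1,2)] by simp
    then have "\<exists>j<n. colsum n X j = 0"
      using sum_ge_all[of n "colsum n X"] sums_eq[of n X] colsum_nonneg[OF assms(1)]
      by (metis add.right_neutral diff_add_cancel diff_ge_0_iff_ge le_less not_le zless_add1_eq
            linorder_not_less zle_add1_eq_le)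
    then show ?thesis using 1 ab by blast
  next
    case 2
    have "(\<Sum>j<n. colsum n X j) \<le> int n - 1"
      using sum_le_except[OF ab(2)] 2 notB_col[OF assms(1,2)] by simp
    then have "\<exists>i<n. rowsum n X i = 0"
      using sum_ge_all[of n "rowsum n X"] sums_eq[of n X] rowsum_nonneg[OF assms(1)]
      by (metis add.right_neutral diff_add_cancel diff_ge_0_iff_ge le_less not_le zless_add1_eq
            linorder_not_less zle_add1_eq_le)
    then show ?thesis using 2 ab by blast
  qed
qed

definition ones :: "nat \<Rightarrow> (nat \<Rightarrow> nat \<Rightarrow> int) \<Rightarrow> int" where
  "ones n X = (\<Sum>i<n. rowsum n X i)"

lemma ones_set:
  assumes "i < n" "j < n"
  shows "ones n (set_entry X i j c) = ones n X - X i j + c"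
proof -
  have "ones n (set_entry X i j c) = (\<Sum>k<n. rowsum n X k + (if k = i then c - X i j else 0))"
    unfolding ones_def using rowsum_set[OF assms(2)] by (intro sum.cong) auto
  also have "\<dots> = ones n X + (c - X i j)"
    using assms(1) by (simp add: sum.distrib ones_def)
  finally show ?thesis by simp
qed

lemma ones_nonneg: "binary n X \<Longrightarrow> ones n X \<ge> 0"
  unfolding ones_def by (rule sum_nonneg) (simp add: rowsum_nonneg)

lemma ones_le: "binary n X \<Longrightarrow> \<not> B n X \<Longrightarrow> ones n X \<le> int n"
proof -
  assume a: "binary n X" "\<not> B n X"
  have "ones n X \<le> (\<Sum>i<n. 1)" unfolding ones_def using notB_row[OF a] by (intro sum_mono) auto
  then show ?thesis by simp
qed

definition mu :: "nat \<Rightarrow> (nat \<Rightarrow> nat \<Rightarrow> int) \<Rightarrow> int" where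
  "mu n X = (if B n X then int (n*n) + 1 + ones n X else int (n*n) - ones n X)"

lemma mu_nonneg: "binary n X \<Longrightarrow> mu n X \<ge> 0"
proof -
  assume a: "binary n X"
  have "int n \<le> int (n*n) \<or> n = 0" by (cases n) auto
  then show ?thesis using ones_nonneg[OF a] ones_le[OF a] unfolding mu_def ones_def
    by (cases "B n X") auto
qed

lemma step_dec:
  assumes bin: "binary n X" and st: "bfha_step n X Y"
  shows "binary n Y \<and> mu n Y < mu n X"
  using st unfolding bfha_step_def
proof (elim conjE disjE)
  assume "\<exists>i<n. \<exists>j<n. 1 \<le> viol n X i j"
    and "\<exists>i<n. \<exists>j<n. X i j = 1 \<and> (\<forall>k<n. \<forall>l<n. X k l = 1 \<longrightarrow> viol n X k l \<le> viol n X i j)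
          \<and> Y = set_entry X i j 0"
  then obtain i j where ij: "i < n" "j < n" "X i j = 1" "Y = set_entry X i j 0"
    and BX: "B n X" unfolding B_def by blast
  have binY: "binary n Y" using binary_set[OF bin] ij by simp
  have o: "ones n Y = ones n X - 1" using ones_set[OF ij(1,2)] ij by simp
  have "mu n Y < mu n X"
    using BX o ones_nonneg[OF binY] ones_nonneg[OF bin] unfolding mu_def by auto
  then show ?thesis using binY by simp
next
  assume nB: "\<not> (\<exists>i<n. \<exists>j<n. 1 \<le> viol n X i j)" and nV: "\<not> V_zero n X"
    and "\<exists>i<n. \<exists>j<n. X i j = 0 \<and> (\<forall>k<n. \<forall>l<n. X k l = 0 \<longrightarrow> viol n X i j \<le> viol n X k l)
          \<and> Y = set_entry X i j 1"
  then obtain i j where ij: "i < n" "j < n" "X i j = 0" "Y = set_entry X i j 1"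
    and mn: "\<forall>k<n. \<forall>l<n. X k l = 0 \<longrightarrow> viol n X i j \<le> viol n X k l" by blast
  have BX: "\<not> B n X" using nB unfolding B_def by blast
  obtain a b where ab: "a < n" "b < n" "rowsum n X a = 0" "colsum n X b = 0"
    using empty_cell[OF bin BX nV] by blast
  have "X a b \<le> 0" using entry_le_rowsum[OF bin ab(1,2)] ab by simp
  then have "X a b = 0" using bin ab unfolding binary_def by force
  then have "viol n X i j \<le> -2" using mn ab unfolding viol_def by force
  then have ri: "rowsum n X i = 0" and cj: "colsum n X j = 0"
    using rowsum_nonneg[OF bin ij(1)] colsum_nonneg[OF bin ij(2)] unfolding viol_def by auto
  have binY: "binary n Y" using binary_set[OF bin] ij by simp
  have rY: "rowsum n Y k \<le> 1" if "k < n" for k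
    using rowsum_set[OF ij(2), of X i 1 k] ij ri notB_row[OF bin BX that] by auto
  have cY: "colsum n Y l \<le> 1" if "l < n" for l
    using colsum_set[OF ij(1), of X j 1 l] ij cj notB_col[OF bin BX that] by auto
  have BY: "\<not> B n Y" unfolding B_def viol_def using rY cY by force
  have o: "ones n Y = ones n X + 1" using ones_set[OF ij(1,2)] ij by simp
  have "mu n Y < mu n X"
    using BX BY o unfolding mu_def by auto
  then show ?thesis using binY by simp
qed

lemma ex_max:
  fixes g :: "nat \<times> nat \<Rightarrow> int"
  assumes "finite S" "S \<noteq> {}"
  shows "\<exists>p\<in>S. \<forall>q\<in>S. g q \<le> g p"
proof -
  have "Max (g ` S) \<in> g ` S" using assms by simp
  then obtain p where "p \<in> S" "g p = Max (g ` S)" by force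
  then show ?thesis using assms by (metis Max_ge finite_imageI imageI)
qed

lemma ex_min:
  fixes g :: "nat \<times> nat \<Rightarrow> int"
  assumes "finite S" "S \<noteq> {}"
  shows "\<exists>p\<in>S. \<forall>q\<in>S. g p \<le> g q"
proof -
  have "Min (g ` S) \<in> g ` S" using assms by simp
  then obtain p where "p \<in> S" "g p = Min (g ` S)" by force
  then show ?thesis using assms by (metis Min_le finite_imageI imageI)
qed

lemma terminal:
  assumes bin: "binary n Y" and nV: "\<not> V_zero n Y"
  shows "\<exists>Z. bfha_step n Y Z"
proof (cases "B n Y")
  case True
  then obtain i j where ij: "i < n" "j < n" "viol n Y i j \<ge> 1" unfolding B_def by blast
  have "\<exists>a<n. \<exists>b<n. Y a b = 1"
  proof (cases "rowsum n Y i \<ge> 1")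
    case True
    then show ?thesis using rowsum_pos_entry[OF bin ij(1)] ij by metis
  next
    case False
    then have "colsum n Y j \<ge> 1" using ij(3) unfolding viol_def by simp
    then show ?thesis using colsum_pos_entry[OF bin ij(2)] ij by metis
  qed
  define S where "S = {p. fst p < n \<and> snd p < n \<and> Y (fst p) (snd p) = 1}"
  have fin: "finite S" unfolding S_def
    by (rule finite_subset[of _ "{..<n} \<times> {..<n}"]) auto
  have ne: "S \<noteq> {}" unfolding S_def using \<open>\<exists>a<n. \<exists>b<n. Y a b = 1\<close> by force
  obtain p where p: "p \<in> S" "\<forall>q\<in>S. viol n Y (fst q) (snd q) \<le> viol n Y (fst p) (snd p)"
    using ex_max[OF fin ne, of "\<lambda>q. viol n Y (fst q) (snd q)"] by blast
  have pp: "fst p < n" "snd p < n" "Y (fst p) (snd p) = 1" using p(1) unfolding S_def by auto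
  have mx: "\<forall>k<n. \<forall>l<n. Y k l = 1 \<longrightarrow> viol n Y k l \<le> viol n Y (fst p) (snd p)"
    using p(2) unfolding S_def by fastforce
  have "\<exists>i<n. \<exists>j<n. Y i j = 1 \<and> (\<forall>k<n. \<forall>l<n. Y k l = 1 \<longrightarrow> viol n Y k l \<le> viol n Y i j)
          \<and> set_entry Y (fst p) (snd p) 0 = set_entry Y i j 0"
    using pp mx by blast
  moreover have "\<exists>i<n. \<exists>j<n. viol n Y i j \<ge> 1" using ij by blast
  ultimately have "bfha_step n Y (set_entry Y (fst p) (snd p) 0)"
    unfolding bfha_step_def using nV by blast
  then show ?thesis by blast
next
  case False
  obtain a b where ab: "a < n" "b < n" "rowsum n Y a = 0" "colsum n Y b = 0"
    using empty_cell[OF bin False nV] by blast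
  have "Y a b \<le> 0" using entry_le_rowsum[OF bin ab(1,2)] ab by simp
  then have Yab: "Y a b = 0" using bin ab unfolding binary_def by force
  obtain i j where ij: "i < n" "j < n" "viol n Y i j \<noteq> 0" using nV unfolding V_zero_def by blast
  then have ij': "viol n Y i j \<le> -1" using False unfolding B_def by force
  define S where "S = {p. fst p < n \<and> snd p < n \<and> Y (fst p) (snd p) = 0}"
  have fin: "finite S" unfolding S_def
    by (rule finite_subset[of _ "{..<n} \<times> {..<n}"]) auto
  have ne: "S \<noteq> {}" unfolding S_def using ab Yab by force
  obtain p where p: "p \<in> S" "\<forall>q\<in>S. viol n Y (fst p) (snd p) \<le> viol n Y (fst q) (snd q)"
    using ex_min[OF fin ne, of "\<lambda>q. viol n Y (fst q) (snd q)"] by blast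
  have pp: "fst p < n" "snd p < n" "Y (fst p) (snd p) = 0" using p(1) unfolding S_def by auto
  have mx: "\<forall>k<n. \<forall>l<n. Y k l = 0 \<longrightarrow> viol n Y (fst p) (snd p) \<le> viol n Y k l"
    using p(2) unfolding S_def by fastforce
  have "\<exists>i<n. \<exists>j<n. Y i j = 0 \<and> (\<forall>k<n. \<forall>l<n. Y k l = 0 \<longrightarrow> viol n Y i j \<le> viol n Y k l)
          \<and> set_entry Y (fst p) (snd p) 1 = set_entry Y i j 1"
    using pp mx by blast
  moreover have "\<exists>i<n. \<exists>j<n. viol n Y i j \<le> -1" using ij ij' by blast
  moreover have "\<not> (\<exists>i<n. \<exists>j<n. viol n Y i j \<ge> 1)" using False unfolding B_def by blast
  ultimately have "bfha_step n Y (set_entry Y (fst p) (snd p) 1)"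
    unfolding bfha_step_def using nV by blast
  then show ?thesis by blast
qed

lemma vzero_feasible:
  assumes "n \<ge> 1" "binary n Y" "V_zero n Y"
  shows "feasible n Y"
proof -
  have v: "rowsum n Y i + colsum n Y j = 2" if "i < n" "j < n" for i j
    using assms(3) that unfolding V_zero_def viol_def by force
  have z: "0 < n" using assms(1) by simp
  have r: "rowsum n Y i = 2 - colsum n Y 0" if "i < n" for i using v[OF that z] by simp
  have c: "colsum n Y j = 2 - rowsum n Y 0" if "j < n" for j using v[OF z that] by simp
  have "(\<Sum>i<n. rowsum n Y i) = (\<Sum>i<n. 2 - colsum n Y 0)" using r by simp
  moreover have "(\<Sum>j<n. colsum n Y j) = (\<Sum>j<n. 2 - rowsum n Y 0)" using c by simp
  moreover have "(\<Sum>i<n. 2 - colsum n Y 0) = int n * (2 - colsum n Y 0)" by simp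
  moreover have "(\<Sum>j<n. 2 - rowsum n Y 0) = int n * (2 - rowsum n Y 0)" by simp
  ultimately have "int n * (2 - colsum n Y 0) = int n * (2 - rowsum n Y 0)"
    using sums_eq[of n Y] by argo
  then have "int n = 0 \<or> 2 - colsum n Y 0 = 2 - rowsum n Y 0" by (simp only: mult_cancel_left)
  then have "colsum n Y 0 = rowsum n Y 0" using z by auto
  then have "rowsum n Y 0 = 1" "colsum n Y 0 = 1" using v[OF z z] by auto
  then show ?thesis unfolding feasible_def using assms(2) r c by auto
qed

lemma reach_binary: "(bfha_step n)\<^sup>*\<^sup>* X Y \<Longrightarrow> binary n X \<Longrightarrow> binary n Y"
  by (induction rule: rtranclp_induct) (auto dest: step_dec)

theorem theorem1:
  fixes n :: nat and X :: "nat \<Rightarrow> nat \<Rightarrow> int"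
  assumes "n \<ge> 1" and "binary n X" and "\<not> feasible n X"
  shows "(\<nexists>f. f 0 = X \<and> (\<forall>k. bfha_step n (f k) (f (Suc k))))
       \<and> (\<forall>Y. (bfha_step n)\<^sup>*\<^sup>* X Y \<and> (\<nexists>Z. bfha_step n Y Z) \<longrightarrow> V_zero n Y \<and> feasible n Y)"
proof (rule conjI)
  show "\<nexists>f. f 0 = X \<and> (\<forall>k. bfha_step n (f k) (f (Suc k)))"
  proof
    assume "\<exists>f. f 0 = X \<and> (\<forall>k. bfha_step n (f k) (f (Suc k)))"
    then obtain f where f0: "f 0 = X" and fs: "\<forall>k. bfha_step n (f k) (f (Suc k))" by blast
    have "binary n (f k) \<and> mu n (f k) + int k \<le> mu n X" for k
    proof (induction k)
      case 0 then show ?case using f0 assms(2) by simp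
    next
      case (Suc k)
      then show ?case using step_dec[of n "f k" "f (Suc k)"] fs by force
    qed
    then have "binary n (f (nat (mu n X) + 1)) \<and> mu n (f (nat (mu n X) + 1)) + int (nat (mu n X) + 1) \<le> mu n X" .
    then show False using mu_nonneg[of n "f (nat (mu n X) + 1)"] mu_nonneg[OF assms(2)] by linarith
  qed
next
  show "\<forall>Y. (bfha_step n)\<^sup>*\<^sup>* X Y \<and> (\<nexists>Z. bfha_step n Y Z) \<longrightarrow> V_zero n Y \<and> feasible n Y"
  proof (intro allI impI)
  fix Y assume a: "(bfha_step n)\<^sup>*\<^sup>* X Y \<and> (\<nexists>Z. bfha_step n Y Z)"
  have binY: "binary n Y" using reach_binary a assms(2) by blast
  have "V_zero n Y" using terminal[OF binY] a by blast
  then show "V_zero n Y \<and> feasible n Y" using vzero_feasible[OF assms(1) binY] by blast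
  qed
qed

end
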